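(* Let $m\ge n$, $c_1,\dots,c_m>0$, positive integers $n_i\le n$ with $\sum_i c_in_i=n$, and surjective linear maps $B_i:\mathbb{R}^n\to\mathbb{R}^{n_i}$ with $\bigcap_i\ker B_i=\{0\}$. With $I$, $J$ as defined in the context, set $$E_g=\inf\Big\{\frac{I((g_i)_{i=1}^m)}{\prod_{i=1}^m(\int_{\mathbb{R}^{n_i}} g_i)^{c_i}}\Big\},\qquad F_g=\sup\Big\{\frac{J((g_i)_{i=1}^m)}{\prod_{i=1}^m(\int_{\mathbb{R}^{n_i}} g_i)^{c_i}}\Big\},$$ the infimum and supremum taken over all $m$-tuples with each $g_i$ a centered Gaussian function on $\mathbb{R}^{n_i}$. Then $E_g\cdot F_g=1$, and $E_g=0$ if and only if $F_g=+\infty$.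
   Context: For non-negative integrable $f_i$ on $\mathbb{R}^{n_i}$: $I((f_i)_{i=1}^m)=\int^*_{\mathbb{R}^n}\sup\{\prod_i f_i^{c_i}(y_i);\ \sum_i c_iB_i^*y_i=x,\ y_i\in\mathbb{R}^{n_i}\}\,dx$ (outer integral) and $J((f_i)_{i=1}^m)=\int_{\mathbb{R}^n}\prod_i f_i^{c_i}(B_ix)\,dx$. $B_i^*$ is the Euclidean adjoint. A centered Gaussian function on $\mathbb{R}^k$ is $x\mapsto\exp(-\langle Ax,x\rangle)$ with $A$ a symmetric positive definite $k\times k$ matrix. *)

theory Defs
  imports "HOL-Analysis.Analysis"
begin

text \<open>R^k is modelled as the extensional functions {..<k} -> real (PiE) with
  Lebesgue (product Borel) measure.\<close>
definition RR :: "nat \<Rightarrow> (nat \<Rightarrow> real) measure" where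
  "RR k = PiM {..<k} (\<lambda>_. lborel)"

definition matvec :: "nat \<Rightarrow> nat \<Rightarrow> (nat \<Rightarrow> nat \<Rightarrow> real) \<Rightarrow> (nat \<Rightarrow> real) \<Rightarrow> (nat \<Rightarrow> real)" where
  "matvec p q M x = (\<lambda>j\<in>{..<p}. \<Sum>l<q. M j l * x l)"

definition transp :: "(nat \<Rightarrow> nat \<Rightarrow> real) \<Rightarrow> (nat \<Rightarrow> nat \<Rightarrow> real)" where
  "transp M = (\<lambda>l j. M j l)"

text \<open>Outer integral of a non-negative (possibly non-measurable) function.\<close>
definition outer_nn_integral :: "'a measure \<Rightarrow> ('a \<Rightarrow> ennreal) \<Rightarrow> ennreal" where
  "outer_nn_integral M f =
     (INF h \<in> {h \<in> borel_measurable M. \<forall>x\<in>space M. f x \<le> h x}. nn_integral M h)"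

definition I_fun :: "nat \<Rightarrow> nat \<Rightarrow> (nat \<Rightarrow> nat) \<Rightarrow> (nat \<Rightarrow> real)
    \<Rightarrow> (nat \<Rightarrow> nat \<Rightarrow> nat \<Rightarrow> real) \<Rightarrow> (nat \<Rightarrow> (nat \<Rightarrow> real) \<Rightarrow> real) \<Rightarrow> ennreal" where
  "I_fun m n ni c B f = outer_nn_integral (RR n)
     (\<lambda>x. SUP y \<in> {y. (\<forall>i<m. y i \<in> space (RR (ni i))) \<and>
                     (\<forall>l<n. (\<Sum>i<m. c i * matvec n (ni i) (transp (B i)) (y i) l) = x l)}.
            ennreal (\<Prod>i<m. f i (y i) powr c i))"

definition J_fun :: "nat \<Rightarrow> nat \<Rightarrow> (nat \<Rightarrow> nat) \<Rightarrow> (nat \<Rightarrow> real)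
    \<Rightarrow> (nat \<Rightarrow> nat \<Rightarrow> nat \<Rightarrow> real) \<Rightarrow> (nat \<Rightarrow> (nat \<Rightarrow> real) \<Rightarrow> real) \<Rightarrow> ennreal" where
  "J_fun m n ni c B f =
     (\<integral>\<^sup>+ x. ennreal (\<Prod>i<m. f i (matvec (ni i) n (B i) x) powr c i) \<partial>RR n)"

definition centered_gaussian :: "nat \<Rightarrow> ((nat \<Rightarrow> real) \<Rightarrow> real) \<Rightarrow> bool" where
  "centered_gaussian k g \<longleftrightarrow> (\<exists>A :: nat \<Rightarrow> nat \<Rightarrow> real.
     (\<forall>j<k. \<forall>l<k. A j l = A l j) \<and>
     (\<forall>x\<in>space (RR k). (\<exists>j<k. x j \<noteq> 0) \<longrightarrow> (\<Sum>j<k. \<Sum>l<k. A j l * x j * x l) > 0) \<and>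
     (\<forall>x\<in>space (RR k). g x = exp (- (\<Sum>j<k. \<Sum>l<k. A j l * x j * x l))))"

definition gauss_tuples :: "nat \<Rightarrow> (nat \<Rightarrow> nat) \<Rightarrow> (nat \<Rightarrow> (nat \<Rightarrow> real) \<Rightarrow> real) set" where
  "gauss_tuples m ni = {g. \<forall>i<m. centered_gaussian (ni i) (g i)}"

definition denom :: "nat \<Rightarrow> (nat \<Rightarrow> nat) \<Rightarrow> (nat \<Rightarrow> real) \<Rightarrow> (nat \<Rightarrow> (nat \<Rightarrow> real) \<Rightarrow> real) \<Rightarrow> real" where
  "denom m ni c g = (\<Prod>i<m. (integral\<^sup>L (RR (ni i)) (g i)) powr c i)"

definition E_g where
  "E_g m n ni c B = (INF g \<in> gauss_tuples m ni. I_fun m n ni c B g / ennreal (denom m ni c g))"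

definition F_g where
  "F_g m n ni c B = (SUP g \<in> gauss_tuples m ni. J_fun m n ni c B g / ennreal (denom m ni c g))"

end

theory Submission
  imports Defs "HOL-Probability.Distributions" "Jordan_Normal_Form.Determinant"
begin


lemma gauss1d:
  fixes a b Q :: real assumes a: "a > 0"
  shows "(\<integral>\<^sup>+y. ennreal (exp (-(a*y\<^sup>2 + 2*b*y + Q))) \<partial>lborel) = ennreal (sqrt (pi/a) * exp (b\<^sup>2/a - Q))"
proof -
  define s where "s = 1 / sqrt (2*a)"
  have s: "s > 0" using a by (simp add: s_def)
  have s2: "2 * s\<^sup>2 = 1/a" using a by (simp add: s_def power_divide)
  have eq: "exp (-(a*y\<^sup>2 + 2*b*y + Q)) = (sqrt (pi/a) * exp (b\<^sup>2/a - Q)) * normal_density (-b/a) s y" for y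
  proof -
    have e1: "2 * pi * s\<^sup>2 = pi / a" using s2 by (metis mult.assoc mult.commute times_divide_eq_right mult_1_right)
    have e2: "(y - -b / a)\<^sup>2 / (2 * s\<^sup>2) = a * (y + b / a)\<^sup>2" using s2 a by simp
    have "normal_density (-b/a) s y = exp (-(a*(y + b/a)\<^sup>2)) / sqrt (pi/a)"
      unfolding normal_density_def e1 by (simp add: e2[symmetric])
    moreover have m2: "-(a*y\<^sup>2 + 2*b*y + Q) = -(a*(y + b/a)\<^sup>2) + (b\<^sup>2/a - Q)"
      using a by (simp add: power2_eq_square field_simps)
    moreover have "sqrt (pi/a) > 0" using a by simp
    moreover have "exp (-(a*y\<^sup>2 + 2*b*y + Q)) = exp (-(a*(y + b/a)\<^sup>2)) * exp (b\<^sup>2/a - Q)"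
      by (subst m2) (simp only: exp_add)
    ultimately show ?thesis using a by simp
  qed
  have "(\<integral>\<^sup>+y. ennreal (exp (-(a*y\<^sup>2 + 2*b*y + Q))) \<partial>lborel)
     = (\<integral>\<^sup>+y. ennreal (sqrt (pi/a) * exp (b\<^sup>2/a - Q)) * ennreal (normal_density (-b/a) s y) \<partial>lborel)"
    apply (rule nn_integral_cong) apply (simp only: eq) by (rule ennreal_mult) (use a in auto)
  also have "\<dots> = ennreal (sqrt (pi/a) * exp (b\<^sup>2/a - Q)) * (\<integral>\<^sup>+y. ennreal (normal_density (-b/a) s y) \<partial>lborel)"
    by (rule nn_integral_cmult) simp
  also have "(\<integral>\<^sup>+y. ennreal (normal_density (-b/a) s y) \<partial>lborel) = 1"
  proof -
    have "(\<integral>\<^sup>+y. ennreal (normal_density (-b/a) s y) \<partial>lborel) = ennreal (\<integral>y. normal_density (-b/a) s y \<partial>lborel)"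
      by (rule nn_integral_eq_integral[OF integrable_normal_density]) (use s in simp_all)
    then show ?thesis using s by simp
  qed
  finally show ?thesis by simp
qed

definition qf :: "nat \<Rightarrow> (nat \<Rightarrow> nat \<Rightarrow> real) \<Rightarrow> (nat \<Rightarrow> real) \<Rightarrow> real" where
  "qf k A x = (\<Sum>j<k. \<Sum>l<k. A j l * x j * x l)"

definition G :: "nat \<Rightarrow> (nat \<Rightarrow> nat \<Rightarrow> real) \<Rightarrow> ennreal" where
  "G k A = (\<integral>\<^sup>+x. ennreal (exp (- qf k A x)) \<partial>RR k)"

lemma qf_meas[measurable]: "(\<lambda>x. qf k A x) \<in> borel_measurable (RR k)"
  unfolding qf_def RR_def by measurable

lemma G0: "G 0 A = 1"
  unfolding G_def RR_def qf_def by (simp add: PiM_empty nn_integral_count_space_finite)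

interpretation lb: product_sigma_finite "\<lambda>_. lborel"
  by (simp add: product_sigma_finite_def lborel.sigma_finite_measure_axioms)

lemma G_Suc: "G (Suc k) A = (\<integral>\<^sup>+x. (\<integral>\<^sup>+y. ennreal (exp (- qf (Suc k) A (x(k:=y)))) \<partial>lborel) \<partial>RR k)"
proof -
  have "{..<Suc k} = insert k {..<k}" by auto
  then show ?thesis unfolding G_def RR_def
    apply simp
    apply (subst lb.product_nn_integral_insert)
    using qf_meas[of "Suc k" A] unfolding RR_def by (auto simp: lessThan_Suc)
qed



definition schur :: "(nat \<Rightarrow> nat \<Rightarrow> real) \<Rightarrow> nat \<Rightarrow> (nat \<Rightarrow> nat \<Rightarrow> real)" where
  "schur A k = (\<lambda>i j. A i j - A i k * A k j / A k k)"

definition symm :: "nat \<Rightarrow> (nat \<Rightarrow> nat \<Rightarrow> real) \<Rightarrow> bool" where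
  "symm k A \<longleftrightarrow> (\<forall>j<k. \<forall>l<k. A j l = A l j)"

definition pd :: "nat \<Rightarrow> (nat \<Rightarrow> nat \<Rightarrow> real) \<Rightarrow> bool" where
  "pd k A \<longleftrightarrow> symm k A \<and> (\<forall>x. (\<exists>j<k. x j \<noteq> 0) \<longrightarrow> qf k A x > 0)"

lemma qf_cong: "(\<And>j. j < k \<Longrightarrow> x j = y j) \<Longrightarrow> qf k A x = qf k A y"
  unfolding qf_def by (intro sum.cong refl) auto

lemma qf_upd:
  assumes sym: "symm (Suc k) A"
  shows "qf (Suc k) A (x(k:=y)) = qf k A x + 2*y*(\<Sum>j<k. A k j * x j) + A k k * y\<^sup>2"
proof -
  let ?x = "x(k:=y)"
  have xx: "\<And>j. j < k \<Longrightarrow> ?x j = x j" by auto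
  have "qf (Suc k) A ?x = (\<Sum>j<Suc k. (\<Sum>l<k. A j l * ?x j * ?x l) + A j k * ?x j * y)"
    unfolding qf_def by simp
  also have "\<dots> = (\<Sum>j<k. (\<Sum>l<k. A j l * ?x j * ?x l) + A j k * ?x j * y) + ((\<Sum>l<k. A k l * y * ?x l) + A k k * y * y)"
    by simp
  also have "\<dots> = (\<Sum>j<k. (\<Sum>l<k. A j l * x j * x l) + A j k * x j * y) + ((\<Sum>l<k. A k l * y * x l) + A k k * y * y)"
    by (simp add: xx)
  also have "\<dots> = qf k A x + (\<Sum>j<k. A k j * x j * y) + (\<Sum>l<k. A k l * x l * y) + A k k * y * y"
  proof -
    have "(\<Sum>j<k. A j k * x j * y) = (\<Sum>j<k. A k j * x j * y)"
      using sym unfolding symm_def by (intro sum.cong refl) auto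
    then show ?thesis unfolding qf_def sum.distrib by (simp add: mult_ac)
  qed
  also have "\<dots> = qf k A x + 2*y*(\<Sum>j<k. A k j * x j) + A k k * y\<^sup>2"
    by (simp add: sum_distrib_left sum_distrib_right mult_ac power2_eq_square)
  finally show ?thesis .
qed

lemma qf_schur:
  assumes sym: "symm (Suc k) A" and a: "A k k \<noteq> 0"
  shows "qf k (schur A k) x = qf k A x - (\<Sum>j<k. A k j * x j)\<^sup>2 / A k k"
proof -
  have "qf k (schur A k) x = qf k A x - (\<Sum>j<k. \<Sum>l<k. A j k * A k l / A k k * x j * x l)"
    unfolding qf_def schur_def by (simp add: left_diff_distrib sum_subtractf)
  also have "(\<Sum>j<k. \<Sum>l<k. A j k * A k l / A k k * x j * x l) = (\<Sum>j<k. \<Sum>l<k. (A k j * x j) * (A k l * x l)) / A k k"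
    unfolding sum_divide_distrib
    using sym unfolding symm_def by (intro sum.cong refl) (auto simp: field_simps)
  also have "\<dots> = (\<Sum>j<k. A k j * x j)\<^sup>2 / A k k"
    by (simp add: power2_eq_square sum_product)
  finally show ?thesis .
qed

lemma symm_schur: "symm (Suc k) A \<Longrightarrow> symm k (schur A k)"
  unfolding symm_def schur_def by (auto simp: mult.commute)

lemma pd_schur:
  assumes "pd (Suc k) A"
  shows "A k k > 0" "pd k (schur A k)"
proof -
  have sym: "symm (Suc k) A" using assms unfolding pd_def by auto
  have "qf (Suc k) A ((\<lambda>_. 0)(k:=1)) > 0"
    using assms unfolding pd_def by (metis fun_upd_same lessI zero_neq_one)
  also have "qf (Suc k) A ((\<lambda>_. 0)(k:=1)) = A k k"
    by (subst qf_upd[OF sym]) (simp add: qf_def)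
  finally show a: "A k k > 0" .
  show "pd k (schur A k)"
    unfolding pd_def
  proof (intro conjI allI impI)
    show "symm k (schur A k)" using symm_schur[OF sym] .
    fix x :: "nat \<Rightarrow> real" assume "\<exists>j<k. x j \<noteq> 0"
    then obtain j where j: "j < k" "x j \<noteq> 0" by auto
    define b where "b = (\<Sum>j<k. A k j * x j)"
    define y where "y = - b / A k k"
    have "qf (Suc k) A (x(k:=y)) > 0"
      using assms j unfolding pd_def by (metis fun_upd_other less_SucI less_not_refl)
    also have "qf (Suc k) A (x(k:=y)) = qf k A x + 2*y*b + A k k * y\<^sup>2"
      unfolding b_def by (rule qf_upd[OF sym])
    also have "\<dots> = qf k (schur A k) x"
      using a unfolding qf_schur[OF sym less_imp_neq[OF a, symmetric]] y_def b_def by (simp add: field_simps power2_eq_square)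
    finally show "qf k (schur A k) x > 0" .
  qed
qed



definition tomat :: "nat \<Rightarrow> (nat \<Rightarrow> nat \<Rightarrow> real) \<Rightarrow> real Matrix.mat" where
  "tomat k A = Matrix.mat k k (\<lambda>(i,j). A i j)"

definition dt :: "nat \<Rightarrow> (nat \<Rightarrow> nat \<Rightarrow> real) \<Rightarrow> real" where
  "dt k A = Determinant.det (tomat k A)"

lemma tomat_carrier[simp]: "tomat k A \<in> carrier_mat k k"
  unfolding tomat_def by simp

lemma tomat_index[simp]: "i < k \<Longrightarrow> j < k \<Longrightarrow> tomat k A $$ (i,j) = A i j"
  unfolding tomat_def by simp

lemma tomat_dim[simp]: "dim_row (tomat k A) = k" "dim_col (tomat k A) = k"
  unfolding tomat_def by simp_all

lemma mult_tomat: "tomat k A * tomat k C = tomat k (\<lambda>i j. \<Sum>l<k. A i l * C l j)"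
  by (rule eq_matI) (auto simp: scalar_prod_def atLeast0LessThan)

lemma dt0: "dt 0 A = 1"
  unfolding dt_def tomat_def by (simp add: Determinant.det_def)

lemma dt_schur:
  assumes a: "A k k \<noteq> 0"
  shows "dt (Suc k) A = A k k * dt k (schur A k)"
proof -
  define a where "a = A k k"
  define Lf where "Lf = (\<lambda>i j. (if i = j then 1 else 0) + (if j = k \<and> i \<noteq> k then A i k / a else (0::real)))"
  define Mf where "Mf = (\<lambda>i j. if i = k then A k j else A i j - A i k * A k j / a)"
  have prod: "tomat (Suc k) A = tomat (Suc k) Lf * tomat (Suc k) Mf"
    unfolding mult_tomat
  proof (rule eq_matI)
    fix i j assume i: "i < dim_row (tomat (Suc k) (\<lambda>i j. \<Sum>l<Suc k. Lf i l * Mf l j))"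
      and j: "j < dim_col (tomat (Suc k) (\<lambda>i j. \<Sum>l<Suc k. Lf i l * Mf l j))"
    then have i: "i < Suc k" and j: "j < Suc k" by auto
    have "(\<Sum>l<Suc k. Lf i l * Mf l j) = (\<Sum>l<Suc k. (if i = l then Mf l j else 0) + (if l = k then (if i \<noteq> k then A i k / a * Mf l j else 0) else 0))"
      by (intro sum.cong refl) (simp add: Lf_def)
    also have "\<dots> = (\<Sum>l<Suc k. (if i = l then Mf l j else 0)) + (\<Sum>l<Suc k. (if l = k then (if i \<noteq> k then A i k / a * Mf l j else 0) else 0))"
      by (rule sum.distrib)
    also have "\<dots> = A i j"
      using i a unfolding Mf_def a_def by (auto simp: field_simps)
    finally show "tomat (Suc k) A $$ (i, j) = tomat (Suc k) (\<lambda>i j. \<Sum>l<Suc k. Lf i l * Mf l j) $$ (i, j)"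
      using i j by simp
  qed simp_all
  have dL: "Determinant.det (tomat (Suc k) Lf) = 1"
  proof -
    have "upper_triangular (tomat (Suc k) Lf)"
      unfolding upper_triangular_def by (auto simp: Lf_def)
    then have "Determinant.det (tomat (Suc k) Lf) = prod_list (diag_mat (tomat (Suc k) Lf))"
      by (rule det_upper_triangular[OF _ tomat_carrier])
    also have "\<dots> = 1"
      unfolding prod_list_diag_prod by (auto simp: Lf_def intro!: prod.neutral)
    finally show ?thesis .
  qed
  have dM: "Determinant.det (tomat (Suc k) Mf) = a * dt k (schur A k)"
  proof -
    have "Determinant.det (tomat (Suc k) Mf) = (\<Sum>i<Suc k. tomat (Suc k) Mf $$ (i, k) * cofactor (tomat (Suc k) Mf) i k)"
      by (rule laplace_expansion_column) auto
    also have "\<dots> = (\<Sum>i<Suc k. if i = k then a * cofactor (tomat (Suc k) Mf) k k else 0)"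
      using a by (intro sum.cong refl) (auto simp: Mf_def a_def)
    also have "\<dots> = a * cofactor (tomat (Suc k) Mf) k k" by simp
    also have "cofactor (tomat (Suc k) Mf) k k = Determinant.det (mat_delete (tomat (Suc k) Mf) k k)"
      unfolding cofactor_def by (simp add: mult_2[symmetric])
    also have "mat_delete (tomat (Suc k) Mf) k k = tomat k (schur A k)"
      by (rule eq_matI) (auto simp: mat_delete_def Mf_def schur_def a_def)
    finally show ?thesis unfolding dt_def .
  qed
  show ?thesis
    unfolding dt_def prod det_mult[OF tomat_carrier tomat_carrier] dL dM[unfolded dt_def] a_def by simp
qed



lemma GL: "pd k A \<Longrightarrow> dt k A > 0 \<and> G k A = ennreal (pi powr (real k / 2) / sqrt (dt k A))"
proof (induction k arbitrary: A)
  case 0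
  then show ?case by (simp add: dt0 G0)
next
  case (Suc k)
  define a where "a = A k k"
  define S where "S = schur A k"
  have a: "a > 0" using pd_schur(1)[OF Suc.prems] unfolding a_def .
  have pS: "pd k S" using pd_schur(2)[OF Suc.prems] unfolding S_def .
  have sym: "symm (Suc k) A" using Suc.prems unfolding pd_def by auto
  from Suc.IH[OF pS] have dS: "dt k S > 0" and GS: "G k S = ennreal (pi powr (real k / 2) / sqrt (dt k S))" by auto
  have dA: "dt (Suc k) A = a * dt k S"
    unfolding a_def S_def by (rule dt_schur) (use a a_def in auto)
  have inner: "(\<integral>\<^sup>+y. ennreal (exp (- qf (Suc k) A (x(k:=y)))) \<partial>lborel) = ennreal (sqrt (pi/a)) * ennreal (exp (- qf k S x))" for x
  proof -
    define b where "b = (\<Sum>j<k. A k j * x j)"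
    have "(\<integral>\<^sup>+y. ennreal (exp (- qf (Suc k) A (x(k:=y)))) \<partial>lborel)
        = (\<integral>\<^sup>+y. ennreal (exp (-(a*y\<^sup>2 + 2*b*y + qf k A x))) \<partial>lborel)"
      unfolding qf_upd[OF sym] b_def a_def by (simp add: algebra_simps)
    also have "\<dots> = ennreal (sqrt (pi/a) * exp (b\<^sup>2/a - qf k A x))"
      by (rule gauss1d[OF a])
    also have "b\<^sup>2/a - qf k A x = - qf k S x"
      unfolding S_def qf_schur[OF sym less_imp_neq[OF a[unfolded a_def], symmetric]] b_def a_def by simp
    also have "ennreal (sqrt (pi/a) * exp (- qf k S x)) = ennreal (sqrt (pi/a)) * ennreal (exp (- qf k S x))"
      by (rule ennreal_mult) (use a in auto)
    finally show ?thesis .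
  qed
  have "G (Suc k) A = (\<integral>\<^sup>+x. ennreal (sqrt (pi/a)) * ennreal (exp (- qf k S x)) \<partial>RR k)"
    unfolding G_Suc inner ..
  also have "\<dots> = ennreal (sqrt (pi/a)) * G k S"
    unfolding G_def by (rule nn_integral_cmult) measurable
  also have "\<dots> = ennreal (sqrt (pi/a) * (pi powr (real k / 2) / sqrt (dt k S)))"
    unfolding GS by (rule ennreal_mult[symmetric]) (use a dS in auto)
  also have "sqrt (pi/a) * (pi powr (real k / 2) / sqrt (dt k S)) = pi powr (real (Suc k) / 2) / sqrt (dt (Suc k) A)"
  proof -
    have "pi powr (real (Suc k) / 2) = pi powr (real k / 2) * pi powr (1/2)"
      by (simp add: powr_add[symmetric] add_divide_distrib add.commute)
    also have "pi powr (1/2) = sqrt pi" by (simp add: powr_half_sqrt)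
    finally show ?thesis unfolding dA using a dS by (simp add: real_sqrt_divide real_sqrt_mult)
  qed
  finally show ?case using dA a dS by simp
qed

definition invpair :: "nat \<Rightarrow> (nat \<Rightarrow> nat \<Rightarrow> real) \<Rightarrow> (nat \<Rightarrow> nat \<Rightarrow> real) \<Rightarrow> bool" where
  "invpair k A C \<longleftrightarrow> (\<forall>i<k. \<forall>j<k. (\<Sum>l<k. A i l * C l j) = (if i = j then 1 else 0)) \<and>
                       (\<forall>i<k. \<forall>j<k. (\<Sum>l<k. C i l * A l j) = (if i = j then 1 else 0))"

lemma invpair_sym: "invpair k A C \<Longrightarrow> invpair k C A"
  unfolding invpair_def by auto

lemma inv_exists:
  assumes "pd k A"
  shows "\<exists>C. symm k C \<and> invpair k A C \<and> dt k A * dt k C = 1"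
proof -
  let ?A = "tomat k A"
  have "dt k A > 0" using GL[OF assms] by auto
  then have "?A \<in> Units (ring_mat TYPE(real) k undefined)"
    by (intro det_non_zero_imp_unit[OF tomat_carrier]) (simp add: dt_def)
  then obtain B where B: "B \<in> carrier_mat k k" and BA: "B * ?A = 1\<^sub>m k" and AB: "?A * B = 1\<^sub>m k"
    unfolding Units_def ring_mat_def by auto
  define C where "C = (\<lambda>i j. B $$ (i,j))"
  have BC: "B = tomat k C"
    by (rule eq_matI) (use B in \<open>auto simp: C_def\<close>)
  have symA: "symm k A" using assms unfolding pd_def by auto
  have tA: "transpose_mat ?A = ?A"
    by (rule eq_matI) (use symA in \<open>auto simp: symm_def\<close>)
  have "transpose_mat B * ?A = 1\<^sub>m k"
  proof -
    have "transpose_mat (?A * B) = transpose_mat B * transpose_mat ?A"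
      by (rule transpose_mult[OF tomat_carrier B])
    then show ?thesis unfolding AB tA by simp
  qed
  then have "transpose_mat B = B"
  proof -
    assume h: "transpose_mat B * ?A = 1\<^sub>m k"
    have "transpose_mat B = transpose_mat B * (?A * B)"
      unfolding AB using B by simp
    also have "\<dots> = (transpose_mat B * ?A) * B"
      using B by (simp add: assoc_mult_mat[of _ k k _ k _ k])
    also have "\<dots> = B" unfolding h using B by simp
    finally show ?thesis .
  qed
  then have symC: "symm k C"
    unfolding symm_def C_def by (metis B carrier_matD index_transpose_mat(1))
  have inv: "invpair k A C"
  proof -
    have 1: "tomat k (\<lambda>i j. \<Sum>l<k. A i l * C l j) = 1\<^sub>m k" using AB unfolding BC mult_tomat .
    have 2: "tomat k (\<lambda>i j. \<Sum>l<k. C i l * A l j) = 1\<^sub>m k" using BA unfolding BC mult_tomat .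
    show ?thesis unfolding invpair_def
    proof (intro conjI allI impI)
      fix i j assume "i < k" "j < k"
      then show "(\<Sum>l<k. A i l * C l j) = (if i = j then 1 else 0)"
        using arg_cong[OF 1, of "\<lambda>M. M $$ (i,j)"] by simp
    next
      fix i j assume "i < k" "j < k"
      then show "(\<Sum>l<k. C i l * A l j) = (if i = j then 1 else 0)"
        using arg_cong[OF 2, of "\<lambda>M. M $$ (i,j)"] by simp
    qed
  qed
  have "dt k A * dt k C = 1"
    using arg_cong[OF AB, of Determinant.det] unfolding dt_def BC det_mult[OF tomat_carrier tomat_carrier] by simp
  with symC inv show ?thesis by blast
qed

definition mv :: "nat \<Rightarrow> (nat \<Rightarrow> nat \<Rightarrow> real) \<Rightarrow> (nat \<Rightarrow> real) \<Rightarrow> (nat \<Rightarrow> real)" where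
  "mv k C y = (\<lambda>j. \<Sum>l<k. C j l * y l)"

lemma mv_inv:
  assumes "invpair k A C" "j < k"
  shows "(\<Sum>l<k. A j l * mv k C y l) = y j"
proof -
  have "(\<Sum>l<k. A j l * mv k C y l) = (\<Sum>l<k. \<Sum>m<k. A j l * C l m * y m)"
    unfolding mv_def by (simp add: sum_distrib_left mult_ac)
  also have "\<dots> = (\<Sum>m<k. (\<Sum>l<k. A j l * C l m) * y m)"
    by (subst sum.swap) (simp add: sum_distrib_right)
  also have "\<dots> = (\<Sum>m<k. (if j = m then y m else 0))"
    using assms unfolding invpair_def by (intro sum.cong refl) auto
  also have "\<dots> = y j" using assms by simp
  finally show ?thesis .
qed

lemma qf_alt: "qf k A x = (\<Sum>j<k. x j * mv k A x j)"
  unfolding qf_def mv_def by (simp add: sum_distrib_left mult_ac)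

lemma qf_mv:
  assumes "invpair k A C"
  shows "qf k A (mv k C y) = qf k C y"
proof -
  have "qf k A (mv k C y) = (\<Sum>j<k. mv k C y j * y j)"
    unfolding qf_alt by (intro sum.cong refl) (simp add: mv_def[of k A] mv_inv[OF assms])
  also have "\<dots> = qf k C y"
    unfolding qf_def mv_def sum_distrib_right by (intro sum.cong refl) (simp add: mult_ac)
  finally show ?thesis .
qed

lemma pd_inv:
  assumes "pd k A" "symm k C" "invpair k A C"
  shows "pd k C"
  unfolding pd_def
proof (intro conjI allI impI)
  show "symm k C" by fact
  fix y :: "nat \<Rightarrow> real" assume "\<exists>j<k. y j \<noteq> 0"
  then obtain j where j: "j < k" "y j \<noteq> 0" by auto
  have "\<exists>l<k. mv k C y l \<noteq> 0"
  proof (rule ccontr)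
    assume "\<not> ?thesis"
    then have "(\<Sum>l<k. A j l * mv k C y l) = 0" by simp
    then show False using mv_inv[OF assms(3) j(1)] j by simp
  qed
  then have "qf k A (mv k C y) > 0" using assms(1) unfolding pd_def by auto
  then show "qf k C y > 0" unfolding qf_mv[OF assms(3)] .
qed

lemma qf_nonneg:
  assumes "pd k A" shows "qf k A x \<ge> 0"
proof (cases "\<exists>j<k. x j \<noteq> 0")
  case True then show ?thesis using assms unfolding pd_def by (auto intro: less_imp_le)
next
  case False
  then have "qf k A x = qf k A (\<lambda>_. 0)" by (intro qf_cong) auto
  then show ?thesis by (simp add: qf_def)
qed

lemma qf_zero:
  assumes "pd k A" "qf k A x = 0" "j < k" shows "x j = 0"
  using assms unfolding pd_def by force



definition tv :: "nat \<Rightarrow> (nat \<Rightarrow> nat \<Rightarrow> real) \<Rightarrow> (nat \<Rightarrow> real) \<Rightarrow> (nat \<Rightarrow> real)" where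
  "tv p B v = (\<lambda>l. \<Sum>j<p. B j l * v j)"

lemma adj: "(\<Sum>j<p. v j * mv n B x j) = (\<Sum>l<n. tv p B v l * x l)"
proof -
  have "(\<Sum>j<p. v j * mv n B x j) = (\<Sum>j<p. \<Sum>l<n. B j l * v j * x l)"
    unfolding mv_def by (simp add: sum_distrib_left mult_ac)
  also have "\<dots> = (\<Sum>l<n. \<Sum>j<p. B j l * v j * x l)" by (rule sum.swap)
  also have "\<dots> = (\<Sum>l<n. tv p B v l * x l)"
    unfolding tv_def by (simp add: sum_distrib_right)
  finally show ?thesis .
qed

definition Nf :: "nat \<Rightarrow> (nat \<Rightarrow> nat \<Rightarrow> real) \<Rightarrow> (nat \<Rightarrow> nat \<Rightarrow> real) \<Rightarrow> (nat \<Rightarrow> nat \<Rightarrow> real)" where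
  "Nf p B C = (\<lambda>l l'. \<Sum>j<p. \<Sum>q<p. B j l * C j q * B q l')"

lemma mv_Nf: "mv n (Nf p B C) x l = tv p B (mv p C (mv n B x)) l"
proof -
  have "mv n (Nf p B C) x l = (\<Sum>l'<n. \<Sum>j<p. \<Sum>q<p. B j l * C j q * B q l' * x l')"
    unfolding mv_def Nf_def by (simp add: sum_distrib_right)
  also have "\<dots> = (\<Sum>j<p. \<Sum>l'<n. \<Sum>q<p. B j l * C j q * B q l' * x l')" by (rule sum.swap)
  also have "\<dots> = (\<Sum>j<p. \<Sum>q<p. \<Sum>l'<n. B j l * C j q * B q l' * x l')" by (simp add: sum.swap[of _ "{..<n}"])
  also have "\<dots> = tv p B (mv p C (mv n B x)) l"
    unfolding tv_def mv_def by (simp add: sum_distrib_left mult_ac)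
  finally show ?thesis .
qed

lemma qf_comp: "qf p C (mv n B x) = qf n (Nf p B C) x"
proof -
  have "qf p C (mv n B x) = (\<Sum>j<p. mv p C (mv n B x) j * mv n B x j)"
    unfolding qf_alt by (simp add: mult.commute)
  also have "\<dots> = (\<Sum>l<n. tv p B (mv p C (mv n B x)) l * x l)" by (rule adj)
  also have "\<dots> = qf n (Nf p B C) x"
    unfolding qf_alt mv_Nf by (simp add: mult.commute)
  finally show ?thesis .
qed

lemma symm_Nf: "symm p C \<Longrightarrow> symm n (Nf p B C)"
  unfolding symm_def Nf_def
  apply (intro allI impI)
  apply (subst sum.swap)
  apply (intro sum.cong refl)
  apply (simp add: mult_ac)
  done

lemma mv_lin: "mv n (\<lambda>l l'. \<Sum>i<m. c i * F i l l') x l = (\<Sum>i<m. c i * mv n (F i) x l)"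
  unfolding mv_def by (simp add: sum_distrib_left sum_distrib_right mult_ac sum.swap[of _ "{..<n}"])

lemma qf_lin: "qf n (\<lambda>l l'. \<Sum>i<m. c i * F i l l') x = (\<Sum>i<m. c i * qf n (F i) x)"
proof -
  have "qf n (\<lambda>l l'. \<Sum>i<m. c i * F i l l') x = (\<Sum>l<n. \<Sum>i<m. x l * (c i * mv n (F i) x l))"
    unfolding qf_alt mv_lin by (simp add: sum_distrib_left)
  also have "\<dots> = (\<Sum>i<m. \<Sum>l<n. x l * (c i * mv n (F i) x l))" by (rule sum.swap)
  also have "\<dots> = (\<Sum>i<m. c i * qf n (F i) x)"
    unfolding qf_alt by (simp add: sum_distrib_left mult_ac)
  finally show ?thesis .
qed

lemma symm_lin: "(\<And>i. i < m \<Longrightarrow> symm n (F i)) \<Longrightarrow> symm n (\<lambda>l l'. \<Sum>i<m. c i * F i l l')"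
  unfolding symm_def by (auto intro!: sum.cong)

lemma qf_diff:
  assumes "symm k A"
  shows "qf k A (\<lambda>j. u j - v j) = qf k A u - 2 * (\<Sum>j<k. u j * mv k A v j) + qf k A v"
proof -
  have e1: "(\<Sum>j<k. \<Sum>l<k. A j l * v j * u l) = (\<Sum>j<k. \<Sum>l<k. A j l * u j * v l)"
    apply (subst sum.swap)
    apply (intro sum.cong refl)
    using assms unfolding symm_def by (simp add: mult_ac)
  have e2: "(\<Sum>j<k. u j * mv k A v j) = (\<Sum>j<k. \<Sum>l<k. A j l * u j * v l)"
    unfolding mv_def by (simp add: sum_distrib_left mult_ac)
  have "qf k A (\<lambda>j. u j - v j) = (\<Sum>j<k. \<Sum>l<k. A j l * u j * u l - A j l * u j * v l - A j l * v j * u l + A j l * v j * v l)"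
    unfolding qf_def by (intro sum.cong refl) (simp add: algebra_simps)
  also have "\<dots> = qf k A u - (\<Sum>j<k. \<Sum>l<k. A j l * u j * v l) - (\<Sum>j<k. \<Sum>l<k. A j l * v j * u l) + qf k A v"
    unfolding qf_def by (simp add: sum.distrib sum_subtractf)
  finally show ?thesis unfolding e1 e2 by simp
qed

lemma exp_powr_real: "exp (a::real) powr (b::real) = exp (b * a)"
  by (simp add: powr_def)

lemma prod_exp_powr: fixes q c :: "nat \<Rightarrow> real" shows "(\<Prod>i<m. exp (- q i) powr c i) = exp (- (\<Sum>i<m. c i * q i))"
  by (simp add: exp_powr_real sum_negf[symmetric] exp_sum)



lemma space_RR: "space (RR k) = PiE {..<k} (\<lambda>_. UNIV)"
  unfolding RR_def by (simp add: space_PiM)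

lemma restrict_space_RR: "restrict x {..<k} \<in> space (RR k)"
  unfolding space_RR by auto

lemma matvec_mv: "j < p \<Longrightarrow> matvec p q M x j = mv q M x j"
  unfolding matvec_def mv_def by simp

lemma matvec_space: "matvec p q M x \<in> space (RR p)"
  unfolding matvec_def space_RR by auto

lemma matvec_transp: "l < n \<Longrightarrow> matvec n p (transp B) y l = tv p B y l"
  unfolding matvec_def tv_def transp_def by simp

definition gA :: "(nat \<Rightarrow> nat) \<Rightarrow> (nat \<Rightarrow> nat \<Rightarrow> nat \<Rightarrow> real) \<Rightarrow> nat \<Rightarrow> (nat \<Rightarrow> real) \<Rightarrow> real" where
  "gA ni A = (\<lambda>i x. exp (- qf (ni i) (A i) x))"

definition NN :: "nat \<Rightarrow> (nat \<Rightarrow> nat) \<Rightarrow> (nat \<Rightarrow> real) \<Rightarrow> (nat \<Rightarrow> nat \<Rightarrow> nat \<Rightarrow> real) \<Rightarrow> (nat \<Rightarrow> nat \<Rightarrow> nat \<Rightarrow> real) \<Rightarrow> (nat \<Rightarrow> nat \<Rightarrow> real)" where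
  "NN m ni c B C = (\<lambda>l l'. \<Sum>i<m. c i * Nf (ni i) (B i) (C i) l l')"

lemma qf_NN: "qf n (NN m ni c B C) x = (\<Sum>i<m. c i * qf (ni i) (C i) (matvec (ni i) n (B i) x))"
proof -
  have "qf (ni i) (C i) (matvec (ni i) n (B i) x) = qf n (Nf (ni i) (B i) (C i)) x" for i
    by (subst qf_cong[of _ _ "mv n (B i) x"]) (auto simp: matvec_mv qf_comp)
  then show ?thesis unfolding NN_def qf_lin by simp
qed

lemma J_val: "J_fun m n ni c B (gA ni C) = G n (NN m ni c B C)"
  unfolding J_fun_def G_def gA_def prod_exp_powr qf_NN ..

lemma symm_NN: "(\<And>i. i < m \<Longrightarrow> symm (ni i) (C i)) \<Longrightarrow> symm n (NN m ni c B C)"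
  unfolding NN_def by (rule symm_lin) (rule symm_Nf)

lemma pd_NN:
  assumes C: "\<And>i. i < m \<Longrightarrow> pd (ni i) (C i)"
    and c: "\<forall>i<m. c i > 0"
    and ker: "\<forall>x\<in>space (RR n). (\<forall>i<m. \<forall>j<ni i. matvec (ni i) n (B i) x j = 0) \<longrightarrow> (\<forall>l<n. x l = 0)"
  shows "pd n (NN m ni c B C)"
  unfolding pd_def
proof (intro conjI allI impI)
  show "symm n (NN m ni c B C)" using C by (intro symm_NN) (auto simp: pd_def)
  fix x :: "nat \<Rightarrow> real" assume "\<exists>j<n. x j \<noteq> 0"
  then obtain j0 where j0: "j0 < n" "x j0 \<noteq> 0" by auto
  have nn: "\<forall>i\<in>{..<m}. 0 \<le> c i * qf (ni i) (C i) (matvec (ni i) n (B i) x)"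
    using C c qf_nonneg by (meson less_imp_le lessThan_iff mult_nonneg_nonneg)
  show "qf n (NN m ni c B C) x > 0"
  proof (rule ccontr)
    assume "\<not> ?thesis"
    then have "(\<Sum>i<m. c i * qf (ni i) (C i) (matvec (ni i) n (B i) x)) = 0"
      unfolding qf_NN using nn by (meson linorder_not_less order_antisym sum_nonneg)
    then have z: "\<forall>i<m. c i * qf (ni i) (C i) (matvec (ni i) n (B i) x) = 0"
      using sum_nonneg_eq_0_iff[of "{..<m}" "\<lambda>i. c i * qf (ni i) (C i) (matvec (ni i) n (B i) x)"] nn by auto
    have "\<forall>i<m. \<forall>j<ni i. matvec (ni i) n (B i) (restrict x {..<n}) j = 0"
    proof (intro allI impI)
      fix i j assume i: "i < m" and j: "j < ni i"
      have "matvec (ni i) n (B i) (restrict x {..<n}) = matvec (ni i) n (B i) x"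
        unfolding matvec_def by auto
      moreover have "qf (ni i) (C i) (matvec (ni i) n (B i) x) = 0" using z c i by (metis less_irrefl mult_eq_0_iff)
      ultimately show "matvec (ni i) n (B i) (restrict x {..<n}) j = 0"
        using qf_zero[OF C[OF i] _ j] by simp
    qed
    then have "restrict x {..<n} j0 = 0" using ker restrict_space_RR j0 by blast
    then show False using j0 by simp
  qed
qed



lemma sup_val:
  assumes Apd: "\<forall>i<m. pd (ni i) (A i)"
    and inv: "\<forall>i<m. invpair (ni i) (A i) (C i)"
    and c: "\<forall>i<m. c i > 0"
    and NI: "invpair n (NN m ni c B C) N'"
  shows "(SUP y \<in> {y. (\<forall>i<m. y i \<in> space (RR (ni i))) \<and>
                     (\<forall>l<n. (\<Sum>i<m. c i * matvec n (ni i) (transp (B i)) (y i) l) = x l)}.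
            ennreal (\<Prod>i<m. gA ni A i (y i) powr c i)) = ennreal (exp (- qf n N' x))"
    (is "(SUP y \<in> ?F. ?v y) = ?r")
proof -
  define N where "N = NN m ni c B C"
  define z where "z = mv n N' x"
  define w where "w = (\<lambda>i. mv n (B i) z)"
  define ys where "ys = (\<lambda>i. restrict (mv (ni i) (C i) (w i)) {..<ni i})"
  have Asym: "\<forall>i<m. symm (ni i) (A i)" using Apd unfolding pd_def by auto
  have T: "(\<Sum>l<n. x l * z l) = qf n N' x"
    unfolding qf_alt z_def ..
  have Nz: "mv n N z l = x l" if "l < n" for l
    using mv_inv[OF NI[folded N_def] that, of x] unfolding z_def mv_def[of n N] by simp
  have mvA: "mv (ni i) (A i) (ys i) j = w i j" if "i < m" "j < ni i" for i j
  proof -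
    have "mv (ni i) (A i) (ys i) j = (\<Sum>l<ni i. A i j l * mv (ni i) (C i) (w i) l)"
      unfolding mv_def[of "ni i" "A i"] ys_def by simp
    also have "\<dots> = w i j" using mv_inv[OF _ that(2)] inv that(1) by blast
    finally show ?thesis .
  qed
  have qfys: "qf (ni i) (A i) (ys i) = qf n (Nf (ni i) (B i) (C i)) z" if "i < m" for i
  proof -
    have "qf (ni i) (A i) (ys i) = qf (ni i) (A i) (mv (ni i) (C i) (w i))"
      by (rule qf_cong) (simp add: ys_def)
    also have "\<dots> = qf (ni i) (C i) (w i)" using qf_mv inv that by blast
    also have "\<dots> = qf n (Nf (ni i) (B i) (C i)) z" unfolding w_def qf_comp ..
    finally show ?thesis .
  qed
  have ysval: "(\<Sum>i<m. c i * qf (ni i) (A i) (ys i)) = qf n N' x"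
  proof -
    have "(\<Sum>i<m. c i * qf (ni i) (A i) (ys i)) = (\<Sum>i<m. c i * qf n (Nf (ni i) (B i) (C i)) z)"
      using qfys by simp
    also have "\<dots> = qf n N z" unfolding N_def NN_def qf_lin ..
    also have "\<dots> = (\<Sum>j<n. z j * x j)" unfolding qf_alt using Nz by simp
    also have "\<dots> = qf n N' x" using T by (simp add: mult.commute)
    finally show ?thesis .
  qed
  have vy: "?v y = ennreal (exp (- (\<Sum>i<m. c i * qf (ni i) (A i) (y i))))" for y
    unfolding gA_def prod_exp_powr ..
  have lower: "qf n N' x \<le> (\<Sum>i<m. c i * qf (ni i) (A i) (y i))" if y: "y \<in> ?F" for y
  proof -
    have feas: "(\<Sum>i<m. c i * tv (ni i) (B i) (y i) l) = x l" if "l < n" for l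
      using y that by (simp add: matvec_transp)
    have cross: "(\<Sum>i<m. c i * (\<Sum>j<ni i. y i j * mv (ni i) (A i) (ys i) j)) = qf n N' x"
    proof -
      have "(\<Sum>i<m. c i * (\<Sum>j<ni i. y i j * mv (ni i) (A i) (ys i) j)) = (\<Sum>i<m. c i * (\<Sum>j<ni i. y i j * mv n (B i) z j))"
        using mvA unfolding w_def by (intro sum.cong refl) auto
      also have "\<dots> = (\<Sum>i<m. c i * (\<Sum>l<n. tv (ni i) (B i) (y i) l * z l))"
        unfolding adj ..
      also have "\<dots> = (\<Sum>l<n. (\<Sum>i<m. c i * tv (ni i) (B i) (y i) l) * z l)"
        by (simp add: sum_distrib_left sum_distrib_right mult_ac sum.swap[of _ "{..<m}"])
      also have "\<dots> = (\<Sum>l<n. x l * z l)" using feas by simp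
      finally show ?thesis using T by simp
    qed
    have split: "qf (ni i) (A i) (y i) = qf (ni i) (A i) (\<lambda>j. y i j - ys i j) + 2 * (\<Sum>j<ni i. y i j * mv (ni i) (A i) (ys i) j) - qf (ni i) (A i) (ys i)"
      if "i < m" for i
      using qf_diff[of "ni i" "A i" "y i" "ys i"] Asym that by simp
    define X where "X = (\<lambda>i. (\<Sum>j<ni i. y i j * mv (ni i) (A i) (ys i) j))"
    define D where "D = (\<lambda>i. qf (ni i) (A i) (\<lambda>j. y i j - ys i j))"
    define Y where "Y = (\<lambda>i. qf (ni i) (A i) (ys i))"
    have "(\<Sum>i<m. c i * qf (ni i) (A i) (y i)) = (\<Sum>i<m. c i * D i + 2 * (c i * X i) - c i * Y i)"
    proof (intro sum.cong refl)
      fix i assume "i \<in> {..<m}"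
      then have "qf (ni i) (A i) (y i) = D i + 2 * X i - Y i" using split unfolding X_def D_def Y_def by simp
      then show "c i * qf (ni i) (A i) (y i) = c i * D i + 2 * (c i * X i) - c i * Y i" by (simp add: right_diff_distrib distrib_left)
    qed
    also have "\<dots> = (\<Sum>i<m. c i * D i) + 2 * (\<Sum>i<m. c i * X i) - (\<Sum>i<m. c i * Y i)"
      by (simp add: sum.distrib sum_subtractf sum_distrib_left)
    finally have "(\<Sum>i<m. c i * qf (ni i) (A i) (y i)) =
        (\<Sum>i<m. c i * qf (ni i) (A i) (\<lambda>j. y i j - ys i j)) + 2 * (\<Sum>i<m. c i * (\<Sum>j<ni i. y i j * mv (ni i) (A i) (ys i) j)) - (\<Sum>i<m. c i * qf (ni i) (A i) (ys i))"
      unfolding X_def D_def Y_def .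
    also have "\<dots> = (\<Sum>i<m. c i * qf (ni i) (A i) (\<lambda>j. y i j - ys i j)) + qf n N' x"
      unfolding cross ysval by simp
    also have "\<dots> \<ge> qf n N' x"
    proof -
      have "0 \<le> (\<Sum>i<m. c i * qf (ni i) (A i) (\<lambda>j. y i j - ys i j))"
        using Apd c qf_nonneg by (intro sum_nonneg) (simp add: less_imp_le)
      then show ?thesis by simp
    qed
    finally show ?thesis .
  qed
  have ysF: "ys \<in> ?F"
  proof -
    have "(\<Sum>i<m. c i * matvec n (ni i) (transp (B i)) (ys i) l) = x l" if l: "l < n" for l
    proof -
      have "tv (ni i) (B i) (ys i) l = tv (ni i) (B i) (mv (ni i) (C i) (w i)) l" for i
        unfolding tv_def ys_def by simp
      then have "(\<Sum>i<m. c i * matvec n (ni i) (transp (B i)) (ys i) l) = (\<Sum>i<m. c i * mv n (Nf (ni i) (B i) (C i)) z l)"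
        using l by (simp add: matvec_transp mv_Nf w_def)
      also have "\<dots> = mv n N z l" unfolding N_def NN_def mv_lin ..
      finally show ?thesis using Nz l by simp
    qed
    moreover have "ys i \<in> space (RR (ni i))" for i unfolding ys_def by (rule restrict_space_RR)
    ultimately show ?thesis by auto
  qed
  show ?thesis
  proof (rule antisym)
    show "(SUP y \<in> ?F. ?v y) \<le> ?r"
    proof (rule SUP_least)
      fix y assume "y \<in> ?F"
      then have "qf n N' x \<le> (\<Sum>i<m. c i * qf (ni i) (A i) (y i))" by (rule lower)
      then show "?v y \<le> ?r" unfolding vy by (intro ennreal_leI) simp
    qed
    have "?r = ?v ys" unfolding vy ysval ..
    also have "\<dots> \<le> (SUP y \<in> ?F. ?v y)" by (rule SUP_upper[OF ysF])
    finally show "?r \<le> (SUP y \<in> ?F. ?v y)" .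
  qed
qed

lemma outer_meas:
  assumes "h \<in> borel_measurable M"
  shows "outer_nn_integral M h = integral\<^sup>N M h"
  unfolding outer_nn_integral_def
proof (rule antisym)
  show "(INF h' \<in> {h' \<in> borel_measurable M. \<forall>x\<in>space M. h x \<le> h' x}. integral\<^sup>N M h') \<le> integral\<^sup>N M h"
    by (rule INF_lower) (use assms in auto)
  show "integral\<^sup>N M h \<le> (INF h' \<in> {h' \<in> borel_measurable M. \<forall>x\<in>space M. h x \<le> h' x}. integral\<^sup>N M h')"
    by (rule INF_greatest) (auto intro!: nn_integral_mono)
qed

lemma I_val:
  assumes Apd: "\<forall>i<m. pd (ni i) (A i)"
    and inv: "\<forall>i<m. invpair (ni i) (A i) (C i)"
    and c: "\<forall>i<m. c i > 0"
    and NI: "invpair n (NN m ni c B C) N'"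
  shows "I_fun m n ni c B (gA ni A) = G n N'"
proof -
  have "I_fun m n ni c B (gA ni A) = outer_nn_integral (RR n) (\<lambda>x. ennreal (exp (- qf n N' x)))"
    unfolding I_fun_def sup_val[OF assms] ..
  also have "\<dots> = G n N'" unfolding G_def by (rule outer_meas) measurable
  finally show ?thesis .
qed



lemma inv_inv_ennreal: "inverse (inverse (x::ennreal)) = x"
proof (cases x rule: ennreal_cases)
  case (real r)
  show ?thesis
  proof (cases "r = 0")
    case True then show ?thesis using real by simp
  next
    case False then have "r > 0" using real by simp
    then show ?thesis using real by (simp add: inverse_ennreal)
  qed
qed simp

lemma inv_anti_ennreal: assumes "(x::ennreal) \<le> y" shows "inverse y \<le> inverse x"
proof (cases x rule: ennreal_cases)
  case (real r)
  show ?thesis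
  proof (cases "r = 0")
    case True then show ?thesis using real by simp
  next
    case False then have r: "r > 0" using real by simp
    show ?thesis
    proof (cases y rule: ennreal_cases)
      case (real s)
      then have "r \<le> s" using assms \<open>x = ennreal r\<close> r by simp
      then have "s > 0" using r by simp
      then show ?thesis using real \<open>x = ennreal r\<close> r \<open>r \<le> s\<close>
        by (simp add: inverse_ennreal le_imp_inverse_le)
    qed simp
  qed
next
  case top then show ?thesis using assms by (simp add: top_unique)
qed

lemma inv_mult_ennreal: assumes "0 < (x::ennreal)" "x < \<infinity>" shows "inverse x * x = 1"
proof (cases x rule: ennreal_cases)
  case (real r)
  then have r: "r > 0" using assms by simp
  then have "inverse x * x = ennreal (inverse r) * ennreal r" using real by (simp add: inverse_ennreal)
  also have "\<dots> = ennreal (inverse r * r)" using r by (simp add: ennreal_mult[symmetric])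
  also have "\<dots> = 1" using r by simp
  finally show ?thesis .
next
  case top then show ?thesis using assms by simp
qed

lemma denom_val:
  assumes "\<forall>i<m. pd (ni i) (A i)"
  shows "denom m ni c (gA ni A) = (\<Prod>i<m. (pi powr (real (ni i) / 2) / sqrt (dt (ni i) (A i))) powr c i)"
  unfolding denom_def
proof (intro prod.cong refl)
  fix i assume "i \<in> {..<m}"
  then have p: "pd (ni i) (A i)" using assms by auto
  have "integral\<^sup>L (RR (ni i)) (gA ni A i) = enn2real (G (ni i) (A i))"
    unfolding gA_def G_def by (rule integral_eq_nn_integral) auto
  also have "\<dots> = pi powr (real (ni i) / 2) / sqrt (dt (ni i) (A i))"
    using GL[OF p] by simp
  finally show "integral\<^sup>L (RR (ni i)) (gA ni A i) powr c i = (pi powr (real (ni i) / 2) / sqrt (dt (ni i) (A i))) powr c i"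
    by simp
qed



lemma core:
  assumes c: "\<forall>i<m. c i > 0"
    and sumn: "(\<Sum>i<m. c i * real (ni i)) = real n"
    and ker: "\<forall>x\<in>space (RR n). (\<forall>i<m. \<forall>j<ni i. matvec (ni i) n (B i) x j = 0) \<longrightarrow> (\<forall>l<n. x l = 0)"
    and Apd: "\<forall>i<m. pd (ni i) (A i)"
    and Cs: "\<forall>i<m. symm (ni i) (C i)"
    and inv: "\<forall>i<m. invpair (ni i) (A i) (C i)"
    and dd: "\<forall>i<m. dt (ni i) (A i) * dt (ni i) (C i) = 1"
  shows "\<exists>r>0. I_fun m n ni c B (gA ni A) / ennreal (denom m ni c (gA ni A)) = ennreal r \<and>
               J_fun m n ni c B (gA ni C) / ennreal (denom m ni c (gA ni C)) = ennreal (1 / r)"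
proof -
  have Cpd: "\<forall>i<m. pd (ni i) (C i)" using pd_inv Apd Cs inv by blast
  define N where "N = NN m ni c B C"
  have Npd: "pd n N" unfolding N_def by (rule pd_NN) (use Cpd c ker in auto)
  obtain N' where N's: "symm n N'" and NI: "invpair n N N'" and dN: "dt n N * dt n N' = 1"
    using inv_exists[OF Npd] by blast
  have N'pd: "pd n N'" by (rule pd_inv[OF Npd N's NI])
  have dNpos: "dt n N > 0" and dN'pos: "dt n N' > 0" using GL[OF Npd] GL[OF N'pd] by auto
  define Ir where "Ir = pi powr (real n / 2) / sqrt (dt n N')"
  define Jr where "Jr = pi powr (real n / 2) / sqrt (dt n N)"
  have Ival: "I_fun m n ni c B (gA ni A) = ennreal Ir"
    unfolding Ir_def using I_val[OF Apd inv c NI[unfolded N_def]] GL[OF N'pd] by simp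
  have Jval: "J_fun m n ni c B (gA ni C) = ennreal Jr"
    unfolding Jr_def J_val N_def[symmetric] using GL[OF Npd] by simp
  define a where "a = (\<lambda>i. pi powr (real (ni i) / 2) / sqrt (dt (ni i) (A i)))"
  define b where "b = (\<lambda>i. pi powr (real (ni i) / 2) / sqrt (dt (ni i) (C i)))"
  have dAv: "denom m ni c (gA ni A) = (\<Prod>i<m. a i powr c i)" unfolding a_def by (rule denom_val[OF Apd])
  have dCv: "denom m ni c (gA ni C) = (\<Prod>i<m. b i powr c i)" unfolding b_def by (rule denom_val[OF Cpd])
  have apos: "a i > 0" if "i < m" for i using GL[of "ni i" "A i"] Apd that unfolding a_def by auto
  have bpos: "b i > 0" if "i < m" for i using GL[of "ni i" "C i"] Cpd that unfolding b_def by auto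
  have ab: "a i * b i = pi powr real (ni i)" if "i < m" for i
  proof -
    have "sqrt (dt (ni i) (A i)) * sqrt (dt (ni i) (C i)) = 1"
      using dd that by (simp add: real_sqrt_mult[symmetric])
    moreover have "pi powr (real (ni i) / 2) * pi powr (real (ni i) / 2) = pi powr real (ni i)"
      by (simp add: powr_add[symmetric])
    ultimately show ?thesis unfolding a_def b_def by (simp add: field_simps)
  qed
  define dA where "dA = (\<Prod>i<m. a i powr c i)"
  define dC where "dC = (\<Prod>i<m. b i powr c i)"
  have dApos: "dA > 0" unfolding dA_def using apos by (intro prod_pos) (simp add: less_imp_neq[symmetric])
  have dCpos: "dC > 0" unfolding dC_def using bpos by (intro prod_pos) (simp add: less_imp_neq[symmetric])
  have dAC: "dA * dC = pi powr real n"
  proof -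
    have "dA * dC = (\<Prod>i<m. a i powr c i * b i powr c i)"
      unfolding dA_def dC_def prod.distrib ..
    also have "\<dots> = (\<Prod>i<m. pi powr (c i * real (ni i)))"
    proof (intro prod.cong refl)
      fix i assume "i \<in> {..<m}"
      then have i: "i < m" by simp
      have "a i powr c i * b i powr c i = (a i * b i) powr c i"
        using apos[OF i] bpos[OF i] by (simp add: powr_mult)
      also have "\<dots> = pi powr (c i * real (ni i))" unfolding ab[OF i] powr_powr by (simp add: mult.commute)
      finally show "a i powr c i * b i powr c i = pi powr (c i * real (ni i))" .
    qed
    also have "\<dots> = pi powr real n" unfolding sumn[symmetric] by (simp add: powr_sum)
    finally show ?thesis .
  qed
  have IJ: "Ir * Jr = pi powr real n"
  proof -
    have "sqrt (dt n N') * sqrt (dt n N) = 1"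
      using dN by (simp add: real_sqrt_mult[symmetric] mult.commute)
    moreover have "pi powr (real n / 2) * pi powr (real n / 2) = pi powr real n"
      by (simp add: powr_add[symmetric])
    ultimately show ?thesis unfolding Ir_def Jr_def by (simp add: field_simps)
  qed
  have Irpos: "Ir > 0" unfolding Ir_def using dN'pos by simp
  have Jrpos: "Jr > 0" unfolding Jr_def using dNpos by simp
  define r where "r = Ir / dA"
  have rpos: "r > 0" unfolding r_def using Irpos dApos by simp
  have "I_fun m n ni c B (gA ni A) / ennreal (denom m ni c (gA ni A)) = ennreal r"
    unfolding Ival dAv dA_def[symmetric] r_def using Irpos dApos by (simp add: divide_ennreal)
  moreover have "J_fun m n ni c B (gA ni C) / ennreal (denom m ni c (gA ni C)) = ennreal (1 / r)"
  proof -
    have "Jr / dC = 1 / r"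
      unfolding r_def using IJ dAC Irpos dApos dCpos by (simp add: field_simps)
    then show ?thesis
      unfolding Jval dCv dC_def[symmetric] using Jrpos dCpos by (simp add: divide_ennreal)
  qed
  ultimately show ?thesis using rpos by blast
qed



lemma cg_pd:
  assumes "centered_gaussian k f"
  shows "\<exists>A. pd k A \<and> (\<forall>x\<in>space (RR k). f x = exp (- qf k A x))"
proof -
  obtain A where sym: "\<forall>j<k. \<forall>l<k. A j l = A l j"
    and pos: "\<forall>x\<in>space (RR k). (\<exists>j<k. x j \<noteq> 0) \<longrightarrow> (\<Sum>j<k. \<Sum>l<k. A j l * x j * x l) > 0"
    and eq: "\<forall>x\<in>space (RR k). f x = exp (- (\<Sum>j<k. \<Sum>l<k. A j l * x j * x l))"
    using assms unfolding centered_gaussian_def by blast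
  have symA: "symm k A" using sym unfolding symm_def .
  have "pd k A"
    unfolding pd_def
  proof (intro conjI allI impI)
    show "symm k A" by fact
    fix x :: "nat \<Rightarrow> real" assume "\<exists>j<k. x j \<noteq> 0"
    then have "\<exists>j<k. restrict x {..<k} j \<noteq> 0" by auto
    then have "qf k A (restrict x {..<k}) > 0" using pos restrict_space_RR unfolding qf_def by blast
    moreover have "qf k A (restrict x {..<k}) = qf k A x" by (rule qf_cong) simp
    ultimately show "qf k A x > 0" by simp
  qed
  moreover have "\<forall>x\<in>space (RR k). f x = exp (- qf k A x)" using eq unfolding qf_def .
  ultimately show ?thesis by blast
qed

lemma pd_cg: "pd k A \<Longrightarrow> centered_gaussian k (\<lambda>x. exp (- qf k A x))"
  unfolding centered_gaussian_def pd_def symm_def qf_def by blast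

lemma gA_in: "(\<forall>i<m. pd (ni i) (A i)) \<Longrightarrow> gA ni A \<in> gauss_tuples m ni"
  unfolding gauss_tuples_def gA_def using pd_cg by blast

lemma funs_cong:
  assumes "\<forall>i<m. \<forall>x\<in>space (RR (ni i)). g i x = h i x"
  shows "I_fun m n ni c B g = I_fun m n ni c B h"
    and "J_fun m n ni c B g = J_fun m n ni c B h"
    and "denom m ni c g = denom m ni c h"
proof -
  show "I_fun m n ni c B g = I_fun m n ni c B h"
    unfolding I_fun_def
    apply (rule arg_cong[where f = "outer_nn_integral (RR n)"])
    apply (rule ext)
    apply (rule SUP_cong[OF refl])
    apply (rule arg_cong[where f = ennreal])
    apply (rule prod.cong[OF refl])
    using assms by auto
  show "J_fun m n ni c B g = J_fun m n ni c B h"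
    unfolding J_fun_def
    apply (rule nn_integral_cong)
    apply (rule arg_cong[where f = ennreal])
    apply (rule prod.cong[OF refl])
    using assms matvec_space by auto
  show "denom m ni c g = denom m ni c h"
    unfolding denom_def
    apply (rule prod.cong[OF refl])
    apply (subst Bochner_Integration.integral_cong[OF refl, where g = "h i" for i])
    using assms by auto
qed

lemma pd_id: "pd k (\<lambda>j l. if j = l then 1 else 0)"
  unfolding pd_def symm_def
proof (intro conjI allI impI)
  fix x :: "nat \<Rightarrow> real" assume "\<exists>j<k. x j \<noteq> 0"
  then obtain j where j: "j < k" "x j \<noteq> 0" by auto
  have "qf k (\<lambda>j l. if j = l then 1 else 0) x = (\<Sum>j<k. \<Sum>l<k. if l = j then x j * x j else 0)"
    unfolding qf_def by (intro sum.cong refl) auto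
  also have "\<dots> = (\<Sum>j<k. (x j)\<^sup>2)"
    by (simp add: power2_eq_square)
  also have "\<dots> > 0"
    using j by (intro sum_pos2[of _ j]) auto
  finally show "qf k (\<lambda>j l. if j = l then 1 else (0::real)) x > 0" .
qed auto



theorem lemma2:
  fixes m n :: nat and ni :: "nat \<Rightarrow> nat" and c :: "nat \<Rightarrow> real"
    and B :: "nat \<Rightarrow> nat \<Rightarrow> nat \<Rightarrow> real"
  assumes "m \<ge> n"
    and "\<forall>i<m. c i > 0"
    and "\<forall>i<m. 0 < ni i \<and> ni i \<le> n"
    and "(\<Sum>i<m. c i * real (ni i)) = real n"
    and "\<forall>i<m. \<forall>z\<in>space (RR (ni i)). \<exists>x\<in>space (RR n). matvec (ni i) n (B i) x = z"
    and "\<forall>x\<in>space (RR n). (\<forall>i<m. \<forall>j<ni i. matvec (ni i) n (B i) x j = 0) \<longrightarrow> (\<forall>l<n. x l = 0)"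
  shows "(F_g m n ni c B < \<infinity> \<longrightarrow> E_g m n ni c B * F_g m n ni c B = 1)
       \<and> (E_g m n ni c B = 0 \<longleftrightarrow> F_g m n ni c B = \<infinity>)"
proof -
  note c = assms(2) and sumn = assms(4) and ker = assms(6)
  define T where "T = gauss_tuples m ni"
  define RI where "RI = (\<lambda>g. I_fun m n ni c B g / ennreal (denom m ni c g))"
  define RJ where "RJ = (\<lambda>g. J_fun m n ni c B g / ennreal (denom m ni c g))"
  have E: "E_g m n ni c B = (INF g\<in>T. RI g)" unfolding E_g_def T_def RI_def ..
  have F: "F_g m n ni c B = (SUP g\<in>T. RJ g)" unfolding F_g_def T_def RJ_def ..
  have getA: "\<exists>A. (\<forall>i<m. pd (ni i) (A i)) \<and> (\<forall>i<m. \<forall>x\<in>space (RR (ni i)). g i x = gA ni A i x)" if "g \<in> T" for g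
  proof -
    have "\<forall>i<m. \<exists>A. pd (ni i) A \<and> (\<forall>x\<in>space (RR (ni i)). g i x = exp (- qf (ni i) A x))"
      using that cg_pd unfolding T_def gauss_tuples_def by blast
    then obtain A where "\<forall>i<m. pd (ni i) (A i) \<and> (\<forall>x\<in>space (RR (ni i)). g i x = exp (- qf (ni i) (A i) x))"
      by metis
    then show ?thesis unfolding gA_def by blast
  qed
  have getC: "\<exists>C. (\<forall>i<m. symm (ni i) (C i) \<and> invpair (ni i) (A i) (C i) \<and> dt (ni i) (A i) * dt (ni i) (C i) = 1)"
    if "\<forall>i<m. pd (ni i) (A i)" for A
  proof -
    have "\<forall>i<m. \<exists>C. symm (ni i) C \<and> invpair (ni i) (A i) C \<and> dt (ni i) (A i) * dt (ni i) C = 1"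
      using that inv_exists by blast
    then show ?thesis by metis
  qed
  have fact1: "\<exists>g'\<in>T. RI g = inverse (RJ g')" if g: "g \<in> T" for g
  proof -
    obtain A where Apd: "\<forall>i<m. pd (ni i) (A i)" and geq: "\<forall>i<m. \<forall>x\<in>space (RR (ni i)). g i x = gA ni A i x"
      using getA[OF g] by blast
    obtain C where Cp: "\<forall>i<m. symm (ni i) (C i) \<and> invpair (ni i) (A i) (C i) \<and> dt (ni i) (A i) * dt (ni i) (C i) = 1"
      using getC[OF Apd] by blast
    obtain r where r: "r > 0" and rI: "RI (gA ni A) = ennreal r" and rJ: "RJ (gA ni C) = ennreal (1 / r)"
      using core[OF c sumn ker Apd] Cp unfolding RI_def RJ_def by blast
    have Cpd: "\<forall>i<m. pd (ni i) (C i)" using pd_inv Apd Cp by blast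
    have "gA ni C \<in> T" unfolding T_def by (rule gA_in[OF Cpd])
    moreover have "RI g = RI (gA ni A)" unfolding RI_def using funs_cong[OF geq] by simp
    moreover have "inverse (ennreal (1 / r)) = ennreal r" using r by (simp add: inverse_ennreal)
    ultimately show ?thesis using rI rJ by metis
  qed
  have fact2: "(\<exists>g\<in>T. RI g = inverse (RJ g')) \<and> 0 < RJ g' \<and> RJ g' < \<infinity>" if g': "g' \<in> T" for g'
  proof -
    obtain C where Cpd: "\<forall>i<m. pd (ni i) (C i)" and geq: "\<forall>i<m. \<forall>x\<in>space (RR (ni i)). g' i x = gA ni C i x"
      using getA[OF g'] by blast
    obtain A where Ap: "\<forall>i<m. symm (ni i) (A i) \<and> invpair (ni i) (C i) (A i) \<and> dt (ni i) (C i) * dt (ni i) (A i) = 1"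
      using getC[OF Cpd] by blast
    have Apd: "\<forall>i<m. pd (ni i) (A i)" using pd_inv Cpd Ap by blast
    have Cs: "\<forall>i<m. symm (ni i) (C i)" using Cpd unfolding pd_def by blast
    have inv: "\<forall>i<m. invpair (ni i) (A i) (C i)" using Ap invpair_sym by blast
    have dd: "\<forall>i<m. dt (ni i) (A i) * dt (ni i) (C i) = 1" using Ap by (simp add: mult.commute)
    obtain r where r: "r > 0" and rI: "RI (gA ni A) = ennreal r" and rJ: "RJ (gA ni C) = ennreal (1 / r)"
      using core[OF c sumn ker Apd Cs inv dd] unfolding RI_def RJ_def by blast
    have "RJ g' = RJ (gA ni C)" unfolding RJ_def using funs_cong[OF geq] by simp
    then have RJg: "RJ g' = ennreal (1 / r)" using rJ by simp
    have "gA ni A \<in> T" unfolding T_def by (rule gA_in[OF Apd])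
    moreover have "inverse (ennreal (1 / r)) = ennreal r" using r by (simp add: inverse_ennreal)
    ultimately have "\<exists>g\<in>T. RI g = inverse (RJ g')" using rI RJg by metis
    moreover have "0 < RJ g'" using RJg r by simp
    moreover have "RJ g' < \<infinity>" using RJg by simp
    ultimately show ?thesis by blast
  qed
  have g0: "gA ni (\<lambda>i j l. if j = l then 1 else 0) \<in> T"
    unfolding T_def by (rule gA_in) (simp add: pd_id)
  define Ev where "Ev = (INF g\<in>T. RI g)"
  define Fv where "Fv = (SUP g\<in>T. RJ g)"
  have EF: "Ev = inverse Fv"
  proof (rule antisym)
    have "RJ g' \<le> inverse Ev" if g'T: "g' \<in> T" for g'
    proof -
      obtain g where g: "g \<in> T" "RI g = inverse (RJ g')" using fact2[OF g'T] by blast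
      have "Ev \<le> inverse (RJ g')" unfolding Ev_def using g by (metis INF_lower)
      then have "inverse (inverse (RJ g')) \<le> inverse Ev" by (rule inv_anti_ennreal)
      then show ?thesis by (simp add: inv_inv_ennreal)
    qed
    then have "Fv \<le> inverse Ev" unfolding Fv_def by (rule SUP_least)
    then have "inverse (inverse Ev) \<le> inverse Fv" by (rule inv_anti_ennreal)
    then show "Ev \<le> inverse Fv" by (simp add: inv_inv_ennreal)
    show "inverse Fv \<le> Ev" unfolding Ev_def
    proof (rule INF_greatest)
      fix g assume "g \<in> T"
      then obtain g' where g': "g' \<in> T" "RI g = inverse (RJ g')" using fact1 by blast
      have "RJ g' \<le> Fv" unfolding Fv_def using g'(1) by (rule SUP_upper)
      then have "inverse Fv \<le> inverse (RJ g')" by (rule inv_anti_ennreal)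
      then show "inverse Fv \<le> RI g" using g' by simp
    qed
  qed
  have Fpos: "0 < Fv"
  proof -
    have "0 < RJ (gA ni (\<lambda>i j l. if j = l then 1 else 0))" using fact2[OF g0] by blast
    also have "\<dots> \<le> Fv" unfolding Fv_def using g0 by (rule SUP_upper)
    finally show ?thesis .
  qed
  have "Fv < \<infinity> \<longrightarrow> Ev * Fv = 1"
    using EF Fpos inv_mult_ennreal by simp
  moreover have "Ev = 0 \<longleftrightarrow> Fv = \<infinity>" using EF by simp
  ultimately show ?thesis unfolding E F Ev_def[symmetric] Fv_def[symmetric] by blast
qed

end
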